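(* Let $V$ be a finite-dimensional complex vector space and $M:\mathbb C\to GL(V)$ a rational function such that $[M(u),M(v)]=0$ for all $u,v\in\mathbb C$. Let $M(u)=M_S(u)M_U(u)$ be the multiplicative Jordan decomposition of $M(u)$ into commuting semisimple and unipotent parts. Then $M_S$ and $M_U$ are rational functions of $u$. *)

theory Defs
  imports "HOL-Analysis.Analysis" "HOL-Computational_Algebra.Polynomial"
begin

text \<open>Endomorphisms of a finite-dimensional complex vector space V = C^'n are
  represented as matrices of type complex^'n::finite^'n (matrix product is **).\<close>

text \<open>A matrix-valued function of u is rational if all its entries are rational
  functions with a common denominator q (a nonzero polynomial), i.e. it agrees with
  P(u)/q(u) wherever q(u) is nonzero.\<close>
definition rational_mat_fun :: "(complex \<Rightarrow> complex^'n::finite^'n) \<Rightarrow> bool" where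
  "rational_mat_fun M \<longleftrightarrow>
     (\<exists>(p :: 'n \<Rightarrow> 'n \<Rightarrow> complex poly) (q :: complex poly). q \<noteq> 0 \<and>
        (\<forall>u. poly q u \<noteq> 0 \<longrightarrow> (\<forall>i j. M u $ i $ j = poly (p i j) u / poly q u)))"

definition semisimple_mat :: "complex^'n::finite^'n \<Rightarrow> bool" where
  "semisimple_mat A \<longleftrightarrow>
     (\<exists>(P :: complex^'n^'n) (D :: complex^'n^'n). invertible P \<and> (\<forall>i j. i \<noteq> j \<longrightarrow> D $ i $ j = 0) \<and> A = P ** D ** matrix_inv P)"

definition matpow :: "complex^'n::finite^'n \<Rightarrow> nat \<Rightarrow> complex^'n::finite^'n" where
  "matpow A k = ((\<lambda>B. A ** B) ^^ k) (mat 1)"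

definition unipotent_mat :: "complex^'n::finite^'n \<Rightarrow> bool" where
  "unipotent_mat A \<longleftrightarrow> (\<exists>k. matpow (A - mat 1) k = 0)"

end

theory Submission
  imports Defs
begin

lemma sum_single_nonzero:
  fixes f :: "'a::finite \<Rightarrow> 'b::comm_monoid_add"
  assumes "\<And>k. k \<noteq> j \<Longrightarrow> f k = 0"
  shows "sum f UNIV = f j"
proof -
  have "sum f UNIV = f j + sum f (UNIV - {j})"
    by (simp add: sum.remove)
  also have "sum f (UNIV - {j}) = 0" using assms by (intro sum.neutral) auto
  finally show ?thesis by simp
qed

definition vcomm :: "complex^'n::finite^'n \<Rightarrow> complex^'n^'n \<Rightarrow> bool" where
  "vcomm Y S \<longleftrightarrow> (\<forall>x. Y *v (S *v x) = S *v (Y *v x))"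

lemma vcomm_iff: "vcomm Y S \<longleftrightarrow> Y ** S = S ** Y"
  unfolding vcomm_def by (simp add: matrix_vector_mul_assoc matrix_eq)

lemma mv_sum: "(A::complex^'n::finite^'m::finite) *v sum f X = (\<Sum>x\<in>X. A *v f x)"
proof (cases "finite X")
  case True then show ?thesis
    by (induction X rule: finite_induct) (auto simp: matrix_vector_right_distrib)
qed simp

lemma sum_mv: "(sum F X) *v (y::complex^'n::finite) = (\<Sum>x\<in>X. (F x :: complex^'n^'m::finite) *v y)"
proof (cases "finite X")
  case True then show ?thesis
    by (induction X rule: finite_induct) (auto simp: matrix_vector_mult_add_rdistrib)
qed simp

lemma mv_scale: "(A::complex^'n::finite^'m::finite) *v (c *s x) = c *s (A *v x)"
  by (rule vector_scalar_commute)

lemma mat_mv: "mat c *v (x::complex^'n::finite) = c *s x"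
proof -
  have "(\<Sum>j\<in>UNIV. (if i = j then c else 0) * x $ j) = c * x $ i" for i
    by (subst sum_single_nonzero[of i]) auto
  then show ?thesis by (simp add: mat_def matrix_vector_mult_def vec_eq_iff)
qed

lemma matpow_mv: "matpow A k *v x = ((\<lambda>y. A *v y) ^^ k) x"
  by (induction k) (auto simp: matpow_def matrix_vector_mul_assoc[symmetric])

lemma funpow_comm:
  assumes "\<And>x. f (g x) = g (f x)"
  shows "f ((g ^^ j) x) = (g ^^ j) (f x)"
  by (induction j) (auto simp: assms)

lemma semisimple_proj:
  fixes S :: "complex^'n::finite^'n"
  assumes "semisimple_mat S"
  obtains Pr :: "complex \<Rightarrow> complex^'n^'n" and L :: "complex set"
  where "finite L"
    "\<And>\<mu> x. S *v (Pr \<mu> *v x) = \<mu> *s (Pr \<mu> *v x)"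
    "\<And>x. (\<Sum>\<mu>\<in>L. Pr \<mu> *v x) = x"
    "\<And>Y \<mu>. vcomm Y S \<Longrightarrow> vcomm Y (Pr \<mu>)"
proof -
  obtain P D :: "complex^'n^'n" where P: "invertible P" and D: "\<And>i j. i \<noteq> j \<Longrightarrow> D $ i $ j = 0"
    and S: "S = P ** D ** matrix_inv P"
    using assms unfolding semisimple_mat_def by blast
  define Q where "Q = matrix_inv P"
  have PQ: "P ** Q = mat 1" "Q ** P = mat 1"
    using P unfolding Q_def invertible_def matrix_inv_def by (metis (mono_tags, lifting) someI_ex)+
  define E :: "complex \<Rightarrow> complex^'n^'n" where
    "E \<mu> = (\<chi> i j. if i = j \<and> D $ i $ i = \<mu> then 1 else 0)" for \<mu>
  define Pr where "Pr \<mu> = P ** E \<mu> ** Q" for \<mu>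
  define L where "L = (\<lambda>i. D $ i $ i) ` UNIV"
  have diagR: "(A ** B) $ i $ j = A $ i $ j * B $ j $ j" if "\<And>i j. i \<noteq> j \<Longrightarrow> B $ i $ j = 0"
    for A B :: "complex^'n^'n" and i j
    unfolding matrix_matrix_mult_def using that by (auto intro: sum_single_nonzero)
  have diagL: "(B ** A) $ i $ j = B $ i $ i * A $ i $ j" if "\<And>i j. i \<noteq> j \<Longrightarrow> B $ i $ j = 0"
    for A B :: "complex^'n^'n" and i j
    unfolding matrix_matrix_mult_def using that by (auto intro: sum_single_nonzero)
  have Ed: "\<And>i j. i \<noteq> j \<Longrightarrow> E \<mu> $ i $ j = 0" for \<mu> by (simp add: E_def)
  have DE: "D ** E \<mu> = (\<chi> i j. \<mu> * E \<mu> $ i $ j)" for \<mu>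
    by (simp add: vec_eq_iff diagL[OF D] E_def)
  have 1: "S *v (Pr \<mu> *v x) = \<mu> *s (Pr \<mu> *v x)" for \<mu> x
  proof -
    have "S ** Pr \<mu> = P ** (D ** (Q ** P) ** E \<mu>) ** Q"
      by (simp add: S Pr_def Q_def matrix_mul_assoc)
    also have "\<dots> = P ** (\<chi> i j. \<mu> * E \<mu> $ i $ j) ** Q" by (simp add: PQ DE)
    also have "\<dots> = (\<chi> i j. \<mu> * Pr \<mu> $ i $ j)"
      by (simp add: Pr_def vec_eq_iff matrix_matrix_mult_def sum_distrib_left mult_ac)
    finally show ?thesis
      by (simp add: matrix_vector_mul_assoc) (simp add: vec_eq_iff matrix_vector_mult_def sum_distrib_left mult_ac)
  qed
  have sumE: "(\<Sum>\<mu>\<in>L. E \<mu>) = mat 1"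
  proof -
    have "(\<Sum>\<mu>\<in>L. E \<mu> $ i $ j) = (if i = j then 1 else 0)" for i j
    proof (cases "i = j")
      case True
      have "(\<Sum>\<mu>\<in>L. E \<mu> $ i $ j) = E (D $ i $ i) $ i $ j"
        using True by (subst sum.remove[of _ "D $ i $ i"]) (auto simp: L_def E_def intro!: sum.neutral)
      then show ?thesis using True by (simp add: E_def)
    qed (simp add: E_def)
    then show ?thesis by (simp add: vec_eq_iff mat_def)
  qed
  have 2: "(\<Sum>\<mu>\<in>L. Pr \<mu> *v x) = x" for x
  proof -
    have "(\<Sum>\<mu>\<in>L. Pr \<mu> *v x) = (\<Sum>\<mu>\<in>L. P *v (E \<mu> *v (Q *v x)))"
      by (simp add: Pr_def matrix_vector_mul_assoc matrix_mul_assoc)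
    also have "\<dots> = P *v ((\<Sum>\<mu>\<in>L. E \<mu>) *v (Q *v x))"
      by (simp add: mv_sum sum_mv)
    also have "\<dots> = x" by (simp add: sumE matrix_vector_mul_assoc PQ)
    finally show ?thesis .
  qed
  have 3: "vcomm Y (Pr \<mu>)" if "vcomm Y S" for Y \<mu>
  proof -
    define Y' where "Y' = Q ** Y ** P"
    have YS: "Y ** S = S ** Y" using that by (simp add: vcomm_iff)
    have e1: "Q ** (Y ** S) ** P = Q ** Y ** P ** D ** (Q ** P)"
      by (simp add: S Q_def[symmetric] matrix_mul_assoc)
    have e2: "Q ** (S ** Y) ** P = (Q ** P) ** D ** Q ** Y ** P"
      by (simp add: S Q_def[symmetric] matrix_mul_assoc)
    have "Y' ** D = Q ** (Y ** S) ** P" using e1 PQ by (simp add: Y'_def)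
    also have "\<dots> = D ** Y'" using e2 PQ by (simp add: YS Y'_def matrix_mul_assoc)
    finally have Y'D: "Y' ** D = D ** Y'" .
    have Y'E: "Y' ** E \<mu> = E \<mu> ** Y'"
    proof -
      have "Y' $ i $ j * D $ j $ j = D $ i $ i * Y' $ i $ j" for i j
        using arg_cong[OF Y'D, of "\<lambda>A. A $ i $ j"] by (simp add: diagR[OF D] diagL[OF D])
      then have h: "Y' $ i $ j \<noteq> 0 \<Longrightarrow> D $ j $ j = D $ i $ i" for i j
        by (metis mult.commute mult_cancel_left)
      have "Y' $ i $ j * E \<mu> $ j $ j = E \<mu> $ i $ i * Y' $ i $ j" for i j
        using h[of i j] by (cases "Y' $ i $ j = 0") (auto simp: E_def mult.commute)
      then show ?thesis by (simp add: vec_eq_iff diagR[OF Ed] diagL[OF Ed])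
    qed
    have PY': "P ** Y' = Y ** P" by (simp add: Y'_def matrix_mul_assoc PQ)
    have Y'Q: "Y' ** Q = Q ** Y" by (simp add: Y'_def matrix_mul_assoc[symmetric] PQ)
    have "Y ** Pr \<mu> = P ** (Y' ** E \<mu>) ** Q"
      by (simp add: Pr_def matrix_mul_assoc PY')
    also have "\<dots> = Pr \<mu> ** Y"
      by (simp add: Y'E Pr_def matrix_mul_assoc[symmetric] Y'Q)
    finally show ?thesis by (simp add: vcomm_iff)
  qed
  show ?thesis
    by (rule that[of L Pr]) (auto simp: 1 2 3, simp add: L_def)
qed


lemma funpow_mv_scale: "(((*v) B) ^^ j) (c *s (z::complex^'n::finite)) = c *s ((((*v) (B::complex^'n^'n)) ^^ j) z)"
  by (induction j) (auto simp: mv_scale)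

lemma funpow_mv_zero: "(((*v) (B::complex^'n::finite^'n)) ^^ j) 0 = 0"
  by (induction j) auto

definition jordan :: "complex^'n::finite^'n \<Rightarrow> complex^'n^'n \<Rightarrow> complex^'n^'n \<Rightarrow> bool" where
  "jordan S U A \<longleftrightarrow> semisimple_mat S \<and> unipotent_mat U \<and> S ** U = U ** S \<and> A = S ** U"

lemma jordan_basic:
  assumes "jordan S U A"
  shows "\<And>x. S *v (U *v x) = U *v (S *v x)" "\<And>x. A *v x = S *v (U *v x)"
    "\<And>x. A *v (S *v x) = S *v (A *v x)"
proof -
  have "S ** U = U ** S" "A = S ** U" using assms by (auto simp: jordan_def)
  then show "\<And>x. S *v (U *v x) = U *v (S *v x)" "\<And>x. A *v x = S *v (U *v x)"
    "\<And>x. A *v (S *v x) = S *v (A *v x)"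
    by (auto simp: matrix_vector_mul_assoc) (metis matrix_mul_assoc)
qed

lemma jordan_nilp:
  assumes J: "jordan S U A" and m: "matpow (U - mat 1) m = 0" and y: "S *v y = \<mu> *s y"
  shows "(((*v) (A - mat \<mu>)) ^^ m) y = 0"
proof -
  note jb = jordan_basic[OF J]
  define N where "N = U - mat 1"
  have Nm: "(((*v) N) ^^ m) z = 0" for z
    using m by (simp add: N_def matpow_mv[symmetric])
  have inv: "S *v (N *v z) = \<mu> *s (N *v z)" if "S *v z = \<mu> *s z" for z
    using that by (simp add: N_def matrix_vector_mult_diff_rdistrib matrix_vector_mult_diff_distrib
        mat_mv jb(1) mv_scale vector_ssub_ldistrib)
  have T: "(A - mat \<mu>) *v z = \<mu> *s (N *v z)" if "S *v z = \<mu> *s z" for z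
    using that by (simp add: N_def matrix_vector_mult_diff_rdistrib mat_mv jb mv_scale vector_ssub_ldistrib)
  have "S *v z = \<mu> *s z \<Longrightarrow> (((*v) (A - mat \<mu>)) ^^ j) z = \<mu> ^ j *s ((((*v) N) ^^ j) z)" for j z
  proof (induction j arbitrary: z)
    case (Suc j)
    have "(((*v) (A - mat \<mu>)) ^^ Suc j) z = (((*v) (A - mat \<mu>)) ^^ j) (\<mu> *s (N *v z))"
      by (simp add: funpow_Suc_right T[OF Suc.prems] del: funpow.simps)
    also have "\<dots> = \<mu> *s (\<mu> ^ j *s ((((*v) N) ^^ j) (N *v z)))"
      by (simp add: funpow_mv_scale Suc.IH[OF inv[OF Suc.prems]])
    also have "\<dots> = \<mu> ^ Suc j *s ((((*v) N) ^^ Suc j) z)"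
      by (simp add: funpow_Suc_right del: funpow.simps)
    finally show ?case .
  qed simp
  then show ?thesis using y Nm by simp
qed




lemma vcomm_sub_mat: "vcomm Y S \<Longrightarrow> vcomm (Y - mat c) S"
  by (simp add: vcomm_def matrix_vector_mult_diff_rdistrib mat_mv mv_scale matrix_vector_mult_diff_distrib)

lemma jordan_key:
  assumes J: "jordan S U A" and k: "(((*v) (A - mat lam)) ^^ k) v = 0"
  shows "S *v v = lam *s v"
proof -
  note jb = jordan_basic[OF J]
  obtain m where m: "matpow (U - mat 1) m = 0" using J by (auto simp: jordan_def unipotent_mat_def)
  obtain Pr L where L: "finite L" and Pr1: "\<And>\<mu> x. S *v (Pr \<mu> *v x) = \<mu> *s (Pr \<mu> *v x)"
    and Pr2: "\<And>x. (\<Sum>\<mu>\<in>L. Pr \<mu> *v x) = x" and Pr3: "\<And>Y \<mu>. vcomm Y S \<Longrightarrow> vcomm Y (Pr \<mu>)"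
    using semisimple_proj[of S] J unfolding jordan_def by metis
  define T where "T = A - mat lam"
  define N where "N = U - mat 1"
  have TS: "vcomm T S" unfolding T_def by (rule vcomm_sub_mat) (simp add: vcomm_def jb)
  have NS: "vcomm N S" unfolding N_def by (rule vcomm_sub_mat) (simp add: vcomm_def jb)
  have Nm: "(((*v) N) ^^ m) z = 0" for z
    using m by (simp add: N_def matpow_mv[symmetric])
  have Tz: "T *v z = (\<mu> - lam) *s z + \<mu> *s (N *v z)" if "S *v z = \<mu> *s z" for z \<mu>
  proof -
    have "T *v z = S *v (U *v z) - lam *s z"
      by (simp add: T_def matrix_vector_mult_diff_rdistrib mat_mv jb(2))
    also have "\<dots> = \<mu> *s (U *v z) - lam *s z" by (simp only: jb(1) that mv_scale)
    finally show ?thesis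
      by (simp add: N_def matrix_vector_mult_diff_rdistrib mat_mv vec_eq_iff algebra_simps)
  qed
  have claim1: "z = 0" if "S *v z = \<mu> *s z" "T *v z = 0" "\<mu> \<noteq> lam" for z \<mu>
  proof -
    define c where "c = - \<mu> / (\<mu> - lam)"
    have "(\<mu> - lam) *s z = - (\<mu> *s (N *v z))" using Tz[OF that(1)] that(2)
      by (simp add: eq_neg_iff_add_eq_0)
    then have e: "(\<mu> - lam) * z $ i = - (\<mu> * (N *v z) $ i)" for i by (simp add: vec_eq_iff left_diff_distrib)
    have ne: "\<mu> - lam \<noteq> 0" using that(3) by simp
    have z: "z = c *s (N *v z)"
      unfolding vec_eq_iff c_def using e ne by (auto simp: field_simps)
    have "z = c ^ j *s ((((*v) N) ^^ j) z)" for j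
    proof (induction j)
      case (Suc j)
      have "(((*v) N) ^^ j) z = c *s ((((*v) N) ^^ Suc j) z)"
        by (subst z) (simp add: funpow_mv_scale funpow_Suc_right del: funpow.simps)
      then show ?case using Suc by (simp add: vec_eq_iff)
    qed simp
    from this[of m] show ?thesis by (simp add: Nm)
  qed
  have claim2: "\<forall>z. S *v z = \<mu> *s z \<longrightarrow> (((*v) T) ^^ j) z = 0 \<longrightarrow> z = 0" if "\<mu> \<noteq> lam" for j \<mu>
  proof (induction j)
    case (Suc j)
    show ?case
    proof (intro allI impI)
      fix z assume z: "S *v z = \<mu> *s z" and Tj: "(((*v) T) ^^ Suc j) z = 0"
      have "S *v (T *v z) = T *v (S *v z)" using TS by (simp add: vcomm_def)
      also have "\<dots> = \<mu> *s (T *v z)" by (simp add: z mv_scale)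
      finally have "S *v (T *v z) = \<mu> *s (T *v z)" .
      moreover have "(((*v) T) ^^ j) (T *v z) = 0" using Tj by (simp add: funpow_Suc_right del: funpow.simps)
      ultimately have "T *v z = 0" using Suc by blast
      then show "z = 0" using claim1 z that by blast
    qed
  qed simp
  have zero: "Pr \<mu> *v v = 0" if "\<mu> \<noteq> lam" for \<mu>
  proof -
    have "vcomm T (Pr \<mu>)" using Pr3[OF TS] .
    then have "(((*v) T) ^^ k) (Pr \<mu> *v v) = Pr \<mu> *v ((((*v) T) ^^ k) v)"
      by (intro funpow_comm[symmetric]) (simp add: vcomm_def)
    also have "\<dots> = 0" using k by (simp add: T_def)
    finally show ?thesis using claim2[OF that] Pr1 by blast
  qed
  have "S *v v = (\<Sum>\<mu>\<in>L. S *v (Pr \<mu> *v v))" by (subst Pr2[symmetric, of v]) (simp add: mv_sum)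
  also have "\<dots> = (\<Sum>\<mu>\<in>L. lam *s (Pr \<mu> *v v))"
    by (intro sum.cong refl) (metis Pr1 zero vector_smult_rzero)
  also have "\<dots> = lam *s v" by (simp add: sum_cmul Pr2)
  finally show ?thesis .
qed

lemma jordan_comm:
  assumes J: "jordan S U A" and Y: "vcomm Y A"
  shows "vcomm Y S"
proof -
  obtain m where m: "matpow (U - mat 1) m = 0" using J by (auto simp: jordan_def unipotent_mat_def)
  obtain Pr L where L: "finite L" and Pr1: "\<And>\<mu> x. S *v (Pr \<mu> *v x) = \<mu> *s (Pr \<mu> *v x)"
    and Pr2: "\<And>x. (\<Sum>\<mu>\<in>L. Pr \<mu> *v x) = x"
    using semisimple_proj[of S] J unfolding jordan_def by metis
  have eig: "S *v (Y *v y) = Y *v (S *v y)" if y: "S *v y = \<mu> *s y" for y \<mu>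
  proof -
    have "vcomm Y (A - mat \<mu>)" using Y
      by (simp add: vcomm_def matrix_vector_mult_diff_rdistrib mat_mv mv_scale matrix_vector_mult_diff_distrib)
    then have "(((*v) (A - mat \<mu>)) ^^ m) (Y *v y) = Y *v ((((*v) (A - mat \<mu>)) ^^ m) y)"
      by (intro funpow_comm[symmetric]) (simp add: vcomm_def)
    also have "\<dots> = 0" using jordan_nilp[OF J m y] by simp
    finally have "S *v (Y *v y) = \<mu> *s (Y *v y)" by (rule jordan_key[OF J])
    then show ?thesis using y by (simp add: mv_scale)
  qed
  show ?thesis unfolding vcomm_def
  proof
    fix x
    have "Y *v (S *v x) = Y *v (S *v (\<Sum>\<mu>\<in>L. Pr \<mu> *v x))" by (simp only: Pr2)
    also have "\<dots> = (\<Sum>\<mu>\<in>L. Y *v (S *v (Pr \<mu> *v x)))" by (simp only: mv_sum)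
    also have "\<dots> = (\<Sum>\<mu>\<in>L. S *v (Y *v (Pr \<mu> *v x)))"
      by (rule sum.cong[OF refl], rule eig[symmetric], rule Pr1)
    also have "\<dots> = S *v (Y *v (\<Sum>\<mu>\<in>L. Pr \<mu> *v x))" by (simp only: mv_sum)
    also have "\<dots> = S *v (Y *v x)" by (simp only: Pr2)
    finally show "Y *v (S *v x) = S *v (Y *v x)" .
  qed
qed


lemma finite_span_fun:
  fixes f :: "complex \<Rightarrow> complex^'m::finite"
  shows "\<exists>T. finite T \<and> (\<forall>u. \<exists>c. f u = (\<Sum>t\<in>T. c t *s f t))"
proof -
  obtain B where B: "B \<subseteq> range f" "vec.independent B" "range f \<subseteq> vec.span B"
    using vec.maximal_independent_subset by blast
  have fB: "finite B" using B(2) vec.finiteI_independent by blast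
  define g where "g b = (SOME t. f t = b)" for b
  have fg: "f (g b) = b" if "b \<in> B" for b
    using B(1) that unfolding g_def by (metis (mono_tags, lifting) image_iff someI_ex subsetD)
  define T where "T = g ` B"
  have fT: "f ` T = B" unfolding T_def using fg by (force simp: image_image)
  have inj: "inj_on f T" unfolding T_def inj_on_def using fg by auto
  have "\<exists>c. f u = (\<Sum>t\<in>T. c t *s f t)" for u
  proof -
    have "f u \<in> vec.span B" using B(3) by auto
    then obtain c where c: "f u = (\<Sum>v\<in>B. c v *s v)" using vec.span_finite[OF fB] by auto
    have "(\<Sum>v\<in>B. c v *s v) = (\<Sum>t\<in>T. c (f t) *s f t)"
      unfolding fT[symmetric] by (rule sum.reindex[OF inj, unfolded comp_def])
    then have "f u = (\<Sum>t\<in>T. c (f t) *s f t)" using c by simp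
    then show ?thesis by (rule exI[of _ "\<lambda>t. c (f t)"])
  qed
  moreover have "finite T" using fB by (simp add: T_def)
  ultimately show ?thesis by metis
qed

lemma finite_span_mat:
  fixes F :: "complex \<Rightarrow> complex^'n::finite^'n"
  shows "\<exists>T. finite T \<and> (\<forall>u. \<exists>c. \<forall>x. F u *v x = (\<Sum>t\<in>T. c t *s (F t *v x)))"
proof -
  define f :: "complex \<Rightarrow> complex^('n \<times> 'n)" where "f u = (\<chi> p. F u $ fst p $ snd p)" for u
  obtain T where T: "finite T" "\<And>u. \<exists>c. f u = (\<Sum>t\<in>T. c t *s f t)"
    using finite_span_fun[of f] by blast
  have "\<exists>c. \<forall>x. F u *v x = (\<Sum>t\<in>T. c t *s (F t *v x))" for u
  proof -
    obtain c where c: "f u = (\<Sum>t\<in>T. c t *s f t)" using T(2) by blast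
    have ent: "F u $ i $ j = (\<Sum>t\<in>T. c t * F t $ i $ j)" for i j
      using arg_cong[OF c, of "\<lambda>v. v $ (i, j)"] by (simp add: f_def)
    have "F u *v x = (\<Sum>t\<in>T. c t *s (F t *v x))" for x
      by (simp add: vec_eq_iff matrix_vector_mult_def ent sum_distrib_left sum_distrib_right mult.assoc)
         (rule allI, rule sum.swap)
    then show ?thesis by blast
  qed
  then show ?thesis using T(1) by blast
qed


lemma joint_eig_span:
  fixes S :: "complex \<Rightarrow> complex^'n::finite^'n"
  assumes "finite T" and ss: "\<And>t. semisimple_mat (S t)" and cm: "\<And>t t'. vcomm (S t) (S t')"
  shows "\<exists>X. finite X \<and> vec.span X = UNIV \<and> (\<forall>x\<in>X. \<forall>t\<in>T. \<exists>l. S t *v x = l *s x)"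
  using assms(1)
proof (induction T rule: finite_induct)
  case empty
  show ?case by (intro exI[of _ cart_basis]) (simp add: finite_cart_basis)
next
  case (insert t F)
  then obtain X where X: "finite X" "vec.span X = UNIV" "\<And>x t'. x \<in> X \<Longrightarrow> t' \<in> F \<Longrightarrow> \<exists>l. S t' *v x = l *s x"
    by blast
  obtain Pr L where L: "finite L" and Pr1: "\<And>\<mu> x. S t *v (Pr \<mu> *v x) = \<mu> *s (Pr \<mu> *v x)"
    and Pr2: "\<And>x. (\<Sum>\<mu>\<in>L. Pr \<mu> *v x) = x" and Pr3: "\<And>Y \<mu>. vcomm Y (S t) \<Longrightarrow> vcomm Y (Pr \<mu>)"
    using semisimple_proj[OF ss[of t]] by metis
  define X' where "X' = (\<lambda>p. Pr (fst p) *v snd p) ` (L \<times> X)"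
  have "finite X'" using L X(1) by (simp add: X'_def)
  moreover have "vec.span X' = UNIV"
  proof -
    have "X \<subseteq> vec.span X'"
    proof
      fix x assume x: "x \<in> X"
      have "(\<Sum>\<mu>\<in>L. Pr \<mu> *v x) \<in> vec.span X'"
        by (rule vec.span_sum, rule vec.span_base) (use x in \<open>auto simp: X'_def intro!: image_eqI[where x="(_, x)"]\<close>)
      then show "x \<in> vec.span X'" by (simp only: Pr2)
    qed
    then have "vec.span X \<subseteq> vec.span X'" by (metis vec.span_mono vec.span_span)
    then show ?thesis using X(2) by auto
  qed
  moreover have "\<forall>y\<in>X'. \<forall>t'\<in>insert t F. \<exists>l. S t' *v y = l *s y"
  proof (intro ballI)
    fix y t' assume y: "y \<in> X'" and t': "t' \<in> insert t F"
    obtain \<mu> x where yx: "y = Pr \<mu> *v x" and x: "x \<in> X" using y by (auto simp: X'_def)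
    show "\<exists>l. S t' *v y = l *s y"
    proof (cases "t' = t")
      case True then show ?thesis using Pr1 yx by blast
    next
      case False
      then have "t' \<in> F" using t' by auto
      then obtain l where l: "S t' *v x = l *s x" using X(3) x by blast
      have "S t' *v y = Pr \<mu> *v (S t' *v x)" using Pr3[OF cm[of t' t]] yx by (simp add: vcomm_def)
      also have "\<dots> = l *s y" by (simp add: l mv_scale yx)
      finally show ?thesis by blast
    qed
  qed
  ultimately show ?case by blast
qed


lemma common_kernel:
  fixes N :: "'b \<Rightarrow> complex^'n::finite^'n"
  assumes fin: "finite T"
    and inv: "\<And>t x. t \<in> T \<Longrightarrow> x \<in> W \<Longrightarrow> N t *v x \<in> W"
    and nil: "\<And>t. t \<in> T \<Longrightarrow> \<exists>k. \<forall>x\<in>W. (((*v) (N t)) ^^ k) x = 0"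
    and cm: "\<And>t t'. t \<in> T \<Longrightarrow> t' \<in> T \<Longrightarrow> vcomm (N t) (N t')"
    and z0: "z0 \<in> W" "z0 \<noteq> 0"
  shows "\<exists>z\<in>W. z \<noteq> 0 \<and> (\<forall>t\<in>T. N t *v z = 0)"
proof -
  have "finite F \<Longrightarrow> F \<subseteq> T \<Longrightarrow> \<exists>z\<in>W. z \<noteq> 0 \<and> (\<forall>t\<in>F. N t *v z = 0)" for F
  proof (induction F rule: finite_induct)
    case empty
    then show ?case using z0 by blast
  next
    case (insert t F)
    then obtain z where z: "z \<in> W" "z \<noteq> 0" "\<And>t'. t' \<in> F \<Longrightarrow> N t' *v z = 0" by auto
    have tT: "t \<in> T" using insert by auto
    define f where "f = (*v) (N t)"
    obtain k where k: "\<And>x. x \<in> W \<Longrightarrow> (f ^^ k) x = 0" using nil[OF tT] unfolding f_def by blast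
    have "k \<noteq> 0" using k[OF z(1)] z(2) by (cases k) auto
    then obtain k' where k': "k = Suc k'" by (cases k) auto
    define j where "j = (LEAST j. (f ^^ Suc j) z = 0)"
    have fj: "(f ^^ Suc j) z = 0" unfolding j_def by (rule LeastI[of _ k']) (use k[OF z(1)] k' in simp)
    define z' where "z' = (f ^^ j) z"
    have "z' \<noteq> 0"
    proof (cases j)
      case 0 then show ?thesis using z(2) by (simp add: z'_def)
    next
      case (Suc i)
      have "i < (LEAST j. (f ^^ Suc j) z = 0)" using Suc j_def by simp
      then have "\<not> (f ^^ Suc i) z = 0" by (rule not_less_Least)
      then show ?thesis using Suc by (simp add: z'_def)
    qed
    moreover have "(f ^^ i) z \<in> W" for i
      by (induction i) (auto simp: z(1) f_def inv[OF tT])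
    then have "z' \<in> W" by (simp add: z'_def)
    moreover have "N t *v z' = 0" using fj by (simp add: z'_def f_def)
    moreover have "N t' *v z' = 0" if "t' \<in> F" for t'
    proof -
      have t'T: "t' \<in> T" using that insert by auto
      have "N t' *v z' = (f ^^ j) (N t' *v z)" unfolding z'_def f_def
        by (rule funpow_comm) (use cm[OF t'T tT] in \<open>simp add: vcomm_def\<close>)
      also have "\<dots> = 0" using z(3)[OF that] by (simp add: f_def funpow_mv_zero)
      finally show ?thesis .
    qed
    ultimately show ?case by blast
  qed
  from this[OF fin subset_refl] show ?thesis .
qed


lemma vcomm_sym: "vcomm A B \<Longrightarrow> vcomm B A"
  by (simp add: vcomm_def)

lemma sum_smult_const: "(\<Sum>t\<in>A. f t *s (x::complex^'n::finite)) = (sum f A) *s x"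
  by (simp add: vec_eq_iff sum_distrib_right)

lemma eigvec_form:
  fixes M S U :: "complex \<Rightarrow> complex^'n::finite^'n"
  assumes J: "\<And>u. jordan (S u) (U u) (M u)" and comm: "\<And>u v. vcomm (M u) (M v)"
  shows "\<exists>X. finite X \<and> vec.span X = UNIV \<and> 0 \<notin> X \<and>
    (\<forall>w\<in>X. \<exists>z a. z $ a \<noteq> 0 \<and> (\<forall>u. S u *v w = ((M u *v z) $ a / z $ a) *s w))"
proof -
  have MS: "vcomm (M v) (S u)" for u v by (rule jordan_comm[OF J comm])
  have SS: "vcomm (S u) (S v)" for u v by (rule jordan_comm[OF J vcomm_sym[OF MS]])
  have ss: "semisimple_mat (S u)" for u using J[of u] by (simp add: jordan_def)
  obtain T1 where T1: "finite T1" "\<And>u. \<exists>c. \<forall>x. S u *v x = (\<Sum>t\<in>T1. c t *s (S t *v x))"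
    using finite_span_mat[of S] by metis
  obtain T2 where T2: "finite T2" "\<And>u. \<exists>c. \<forall>x. M u *v x = (\<Sum>t\<in>T2. c t *s (M t *v x))"
    using finite_span_mat[of M] by metis
  define T where "T = T1 \<union> T2"
  have fT: "finite T" using T1 T2 by (simp add: T_def)
  obtain X0 where X0: "finite X0" "vec.span X0 = UNIV" "\<And>x t. x \<in> X0 \<Longrightarrow> t \<in> T \<Longrightarrow> \<exists>l. S t *v x = l *s x"
    using joint_eig_span[of T S, OF fT ss SS] by metis
  define X where "X = X0 - {0}"
  have "finite X" "vec.span X = UNIV" "0 \<notin> X" using X0 by (auto simp: X_def)
  moreover have "\<exists>z a. z $ a \<noteq> 0 \<and> (\<forall>u. S u *v w = ((M u *v z) $ a / z $ a) *s w)" if w: "w \<in> X" for w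
  proof -
    have "\<forall>t\<in>T. \<exists>l. S t *v w = l *s w" using X0(3) w by (auto simp: X_def)
    then obtain lam where lam: "\<And>t. t \<in> T \<Longrightarrow> S t *v w = lam t *s w" by metis
    define W where "W = {x. \<forall>t\<in>T. S t *v x = lam t *s x}"
    define N where "N t = M t - mat (lam t)" for t
    have wW: "w \<in> W" using lam by (simp add: W_def)
    have w0: "w \<noteq> 0" using w by (simp add: X_def)
    have inv: "N t *v x \<in> W" if "t \<in> T" "x \<in> W" for t x
    proof -
      have "S t' *v (N t *v x) = lam t' *s (N t *v x)" if "t' \<in> T" for t'
      proof -
        have "S t' *v (N t *v x) = N t *v (S t' *v x)"
          using vcomm_sub_mat[OF MS[of t t'], of "lam t"] by (simp add: N_def vcomm_def)
        also have "\<dots> = lam t' *s (N t *v x)" using \<open>x \<in> W\<close> that by (simp add: W_def mv_scale)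
        finally show ?thesis .
      qed
      then show ?thesis by (simp add: W_def)
    qed
    have nil: "\<exists>k. \<forall>x\<in>W. (((*v) (N t)) ^^ k) x = 0" if "t \<in> T" for t
    proof -
      obtain m where m: "matpow (U t - mat 1) m = 0" using J[of t] by (auto simp: jordan_def unipotent_mat_def)
      show ?thesis
      proof (rule exI[of _ m], intro ballI)
        fix x assume "x \<in> W"
        then have "S t *v x = lam t *s x" using that by (simp add: W_def)
        then show "(((*v) (N t)) ^^ m) x = 0" unfolding N_def by (rule jordan_nilp[OF J m])
      qed
    qed
    have cm: "vcomm (N t) (N t')" if "t \<in> T" "t' \<in> T" for t t'
      unfolding N_def by (intro vcomm_sub_mat vcomm_sym[OF vcomm_sub_mat] comm)
    obtain z where z: "z \<in> W" "z \<noteq> 0" "\<And>t. t \<in> T \<Longrightarrow> N t *v z = 0"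
      using common_kernel[of T W N w, OF fT inv nil cm wW w0] by metis
    obtain a where a: "z $ a \<noteq> 0" using z(2) by (auto simp: vec_eq_iff)
    have Mz: "M t *v z = lam t *s z" if "t \<in> T" for t
      using z(3)[OF that] by (simp add: N_def matrix_vector_mult_diff_rdistrib mat_mv)
    have "S u *v w = ((M u *v z) $ a / z $ a) *s w" for u
    proof -
      obtain c where c: "\<And>x. S u *v x = (\<Sum>t\<in>T1. c t *s (S t *v x))" using T1(2) by blast
      obtain c' where c': "\<And>x. M u *v x = (\<Sum>t\<in>T2. c' t *s (M t *v x))" using T2(2) by blast
      define s where "s = (\<Sum>t\<in>T1. c t * lam t)"
      define \<tau> where "\<tau> = (\<Sum>t\<in>T2. c' t * lam t)"
      have SW: "S u *v x = s *s x" if "x \<in> W" for x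
      proof -
        have "S u *v x = (\<Sum>t\<in>T1. (c t * lam t) *s x)"
          unfolding c using that by (intro sum.cong refl) (auto simp: W_def T_def)
        then show ?thesis by (simp add: sum_smult_const s_def)
      qed
      have Mu: "M u *v z = \<tau> *s z"
      proof -
        have "M u *v z = (\<Sum>t\<in>T2. (c' t * lam t) *s z)"
          unfolding c' using Mz by (intro sum.cong refl) (auto simp: T_def)
        then show ?thesis by (simp add: sum_smult_const \<tau>_def)
      qed
      have "(((*v) (M u - mat \<tau>)) ^^ 1) z = 0"
        by (simp add: Mu matrix_vector_mult_diff_rdistrib mat_mv)
      then have "S u *v z = \<tau> *s z" by (rule jordan_key[OF J])
      then have "s *s z = \<tau> *s z" using SW[OF z(1)] by simp
      then have "s * z $ a = \<tau> * z $ a" by (metis vector_smult_component)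
      then have "s = \<tau>" using a by simp
      moreover have "(M u *v z) $ a / z $ a = \<tau>" using a Mu by simp
      ultimately show ?thesis using SW[OF wW] by simp
    qed
    then show ?thesis using a by blast
  qed
  ultimately show ?thesis by metis
qed


definition rf :: "(complex \<Rightarrow> complex) \<Rightarrow> bool" where
  "rf g \<longleftrightarrow> (\<exists>p q. q \<noteq> 0 \<and> (\<forall>u. poly q u \<noteq> 0 \<longrightarrow> g u = poly p u / poly q u))"

lemma rf_const: "rf (\<lambda>u. c)"
  unfolding rf_def by (rule exI[of _ "[:c:]"], rule exI[of _ 1]) simp

lemma rf_add:
  assumes "rf f" "rf g" shows "rf (\<lambda>u. f u + g u)"
proof -
  obtain p1 q1 where 1: "q1 \<noteq> 0" "\<And>u. poly q1 u \<noteq> 0 \<Longrightarrow> f u = poly p1 u / poly q1 u"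
    using assms(1) unfolding rf_def by blast
  obtain p2 q2 where 2: "q2 \<noteq> 0" "\<And>u. poly q2 u \<noteq> 0 \<Longrightarrow> g u = poly p2 u / poly q2 u"
    using assms(2) unfolding rf_def by blast
  show ?thesis unfolding rf_def
    by (rule exI[of _ "p1 * q2 + p2 * q1"], rule exI[of _ "q1 * q2"])
       (use 1 2 in \<open>auto simp: field_simps\<close>)
qed

lemma rf_mult:
  assumes "rf f" "rf g" shows "rf (\<lambda>u. f u * g u)"
proof -
  obtain p1 q1 where 1: "q1 \<noteq> 0" "\<And>u. poly q1 u \<noteq> 0 \<Longrightarrow> f u = poly p1 u / poly q1 u"
    using assms(1) unfolding rf_def by blast
  obtain p2 q2 where 2: "q2 \<noteq> 0" "\<And>u. poly q2 u \<noteq> 0 \<Longrightarrow> g u = poly p2 u / poly q2 u"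
    using assms(2) unfolding rf_def by blast
  show ?thesis unfolding rf_def
    by (rule exI[of _ "p1 * p2"], rule exI[of _ "q1 * q2"])
       (use 1 2 in \<open>auto simp: field_simps\<close>)
qed

lemma rf_sum:
  assumes "\<And>a. a \<in> A \<Longrightarrow> rf (f a)"
  shows "rf (\<lambda>u. \<Sum>a\<in>A. f a u)"
proof (cases "finite A")
  case True
  then show ?thesis using assms
    by (induction A rule: finite_induct) (auto simp: rf_const intro!: rf_add)
qed (simp add: rf_const)

lemma rf_inverse:
  assumes "rf f" "\<And>u. f u \<noteq> 0" shows "rf (\<lambda>u. 1 / f u)"
proof -
  obtain p q where 1: "q \<noteq> 0" "\<And>u. poly q u \<noteq> 0 \<Longrightarrow> f u = poly p u / poly q u"
    using assms(1) unfolding rf_def by blast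
  obtain u0 where u0: "poly q u0 \<noteq> 0" using 1(1) poly_all_0_iff_0 by blast
  have "poly p u0 \<noteq> 0" using 1(2)[OF u0] assms(2)[of u0] by auto
  then have p0: "p \<noteq> 0" by auto
  show ?thesis unfolding rf_def
    by (rule exI[of _ "q * q"], rule exI[of _ "p * q"]) (use 1 p0 assms(2) in \<open>auto simp: field_simps\<close>)
qed

lemma rf_mat:
  fixes F :: "complex \<Rightarrow> complex^'n::finite^'n"
  assumes "\<And>i j. rf (\<lambda>u. F u $ i $ j)"
  shows "rational_mat_fun F"
proof -
  define G where "G i j pq \<longleftrightarrow> snd pq \<noteq> 0 \<and>
    (\<forall>u. poly (snd pq) u \<noteq> 0 \<longrightarrow> F u $ i $ j = poly (fst pq) u / poly (snd pq) u)" for i j pq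
  have ex: "\<exists>pq. G i j pq" for i j
  proof -
    obtain p q where "q \<noteq> 0" "\<forall>u. poly q u \<noteq> 0 \<longrightarrow> F u $ i $ j = poly p u / poly q u"
      using assms[of i j] unfolding rf_def by blast
    then have "G i j (p, q)" by (simp add: G_def)
    then show ?thesis ..
  qed
  define P where "P i j = fst (SOME pq. G i j pq)" for i j
  define Q where "Q i j = snd (SOME pq. G i j pq)" for i j
  have PQ: "\<And>i j. Q i j \<noteq> 0"
    "\<And>i j u. poly (Q i j) u \<noteq> 0 \<Longrightarrow> F u $ i $ j = poly (P i j) u / poly (Q i j) u"
  proof -
    fix i j u
    have "G i j (P i j, Q i j)" unfolding P_def Q_def using someI_ex[OF ex[of i j]] by simp
    then show "Q i j \<noteq> 0" "poly (Q i j) u \<noteq> 0 \<Longrightarrow> F u $ i $ j = poly (P i j) u / poly (Q i j) u"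
      unfolding G_def by simp_all
  qed
  define q where "q = (\<Prod>k\<in>UNIV. Q (fst k) (snd k))"
  define R where "R i j = (\<Prod>k\<in>UNIV - {(i, j)}. Q (fst k) (snd k))" for i j
  have qR: "q = Q i j * R i j" for i j
    unfolding q_def R_def by (subst prod.remove[of UNIV "(i, j)"]) simp_all
  have "q \<noteq> 0" unfolding q_def by (subst prod_zero_iff) (simp_all add: PQ(1))
  moreover have "F u $ i $ j = poly (P i j * R i j) u / poly q u" if "poly q u \<noteq> 0" for u i j
  proof -
    have "poly (Q i j) u * poly (R i j) u \<noteq> 0" using that qR[of i j] by simp
    then have "poly (Q i j) u \<noteq> 0" "poly (R i j) u \<noteq> 0" by auto
    then show ?thesis unfolding PQ(2)[OF \<open>poly (Q i j) u \<noteq> 0\<close>] qR[of i j] by simp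
  qed
  ultimately show ?thesis unfolding rational_mat_fun_def
    by (intro exI[of _ "\<lambda>i j. P i j * R i j"] exI[of _ q]) blast
qed

lemma rational_mat_entry_rf:
  assumes "rational_mat_fun F" shows "rf (\<lambda>u. F u $ i $ j)"
  using assms unfolding rational_mat_fun_def rf_def by blast

lemma col_entry: "(A::complex^'n::finite^'m::finite) $ i $ k = (A *v axis k 1) $ i"
  by (simp add: matrix_vector_mult_def axis_def, subst sum_single_nonzero[of k]) auto



theorem lemma4p12:
  fixes M MS MU :: "complex \<Rightarrow> complex^'n::finite^'n"
  assumes rat: "rational_mat_fun M"
    and inv: "\<And>u. invertible (M u)"
    and comm: "\<And>u v. M u ** M v = M v ** M u"
    and jordan: "\<And>u. semisimple_mat (MS u) \<and> unipotent_mat (MU u) \<and>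
                      MS u ** MU u = MU u ** MS u \<and> M u = MS u ** MU u"
  shows "rational_mat_fun MS \<and> rational_mat_fun MU"
proof -
  have J: "jordan (MS u) (MU u) (M u)" for u using jordan[of u] by (simp add: jordan_def)
  have C: "vcomm (M u) (M v)" for u v using comm[of u v] by (simp add: vcomm_iff)
  obtain X where X: "finite X" "vec.span X = UNIV" "0 \<notin> X"
    "\<And>w. w \<in> X \<Longrightarrow> \<exists>z a. z $ a \<noteq> 0 \<and> (\<forall>u. MS u *v w = ((M u *v z) $ a / z $ a) *s w)"
    using eigvec_form[of MS MU M, OF J C] by metis
  define H where "H w za \<longleftrightarrow> snd za $ fst za \<noteq> 0 \<and>
     (\<forall>u. MS u *v w = ((M u *v snd za) $ fst za / snd za $ fst za) *s w)" for w za
  have exH: "\<exists>za. H w za" if wX: "w \<in> X" for w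
  proof -
    obtain z a where "z $ a \<noteq> 0" "\<forall>u. MS u *v w = ((M u *v z) $ a / z $ a) *s w"
      using X(4)[OF wX] by blast
    then have "H w (a, z)" by (simp add: H_def)
    then show ?thesis ..
  qed
  define z where "z w = snd (SOME za. H w za)" for w
  define a where "a w = fst (SOME za. H w za)" for w
  define \<sigma> where "\<sigma> w u = (M u *v z w) $ a w / z w $ a w" for w u
  have za: "z w $ a w \<noteq> 0" "MS u *v w = \<sigma> w u *s w" if "w \<in> X" for w u
  proof -
    have "H w (a w, z w)" unfolding a_def z_def using someI_ex[OF exH[OF that]] by simp
    then show "z w $ a w \<noteq> 0" "MS u *v w = \<sigma> w u *s w" unfolding H_def \<sigma>_def by simp_all
  qed
  have Mrf: "rf (\<lambda>u. M u $ i $ j)" for i j by (rule rational_mat_entry_rf[OF rat])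
  have \<sigma>rf: "rf (\<sigma> w)" if "w \<in> X" for w
  proof -
    have eq: "\<sigma> w = (\<lambda>u. \<Sum>j\<in>UNIV. M u $ a w $ j * (z w $ j / z w $ a w))"
      by (auto simp: \<sigma>_def matrix_vector_mult_def sum_divide_distrib)
    show ?thesis unfolding eq by (intro rf_sum rf_mult Mrf rf_const)
  qed
  have MSinj: "y1 = y2" if "MS u *v y1 = MS u *v y2" for u y1 y2
  proof -
    have MU: "M u *v y = MU u *v (MS u *v y)" for y
      using jordan[of u] by (simp add: matrix_vector_mul_assoc)
    have "M u *v y1 = M u *v y2" using that by (simp add: MU)
    then show ?thesis using inj_matrix_vector_mult[OF inv[of u]] by (simp add: inj_eq)
  qed
  have \<sigma>0: "\<sigma> w u \<noteq> 0" if "w \<in> X" for w u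
  proof
    assume "\<sigma> w u = 0"
    then have "MS u *v w = MS u *v 0" using za(2)[OF that, of u] by simp
    then have "w = 0" by (rule MSinj)
    then show False using that X(3) by simp
  qed
  have "\<exists>c. axis k 1 = (\<Sum>w\<in>X. c w *s w)" for k :: 'n
  proof -
    have "axis k 1 \<in> vec.span X" using X(2) by simp
    then show ?thesis using vec.span_finite[OF X(1)] by auto
  qed
  then obtain coef where coef: "\<And>k. axis k 1 = (\<Sum>w\<in>X. coef k w *s w)" by metis
  have MSent: "MS u $ i $ k = (\<Sum>w\<in>X. coef k w * (\<sigma> w u * w $ i))" for u i k
  proof -
    have "MS u *v axis k 1 = (\<Sum>w\<in>X. coef k w *s (\<sigma> w u *s w))"
      by (subst coef) (simp add: mv_sum mv_scale za(2))
    then show ?thesis by (simp add: col_entry[of "MS u"] mult.assoc)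
  qed
  have MUent: "MU u $ i $ k = (\<Sum>i'\<in>UNIV. M u $ i' $ k * (\<Sum>w\<in>X. coef i' w * ((1 / \<sigma> w u) * w $ i)))" for u i k
  proof -
    define y where "y = (\<Sum>i'\<in>UNIV. M u $ i' $ k *s (\<Sum>w\<in>X. coef i' w *s ((1 / \<sigma> w u) *s w)))"
    have inner: "MS u *v (\<Sum>w\<in>X. coef i' w *s ((1 / \<sigma> w u) *s w)) = axis i' 1" for i'
    proof -
      have "MS u *v (\<Sum>w\<in>X. coef i' w *s ((1 / \<sigma> w u) *s w))
          = (\<Sum>w\<in>X. coef i' w *s ((1 / \<sigma> w u) *s (MS u *v w)))"
        by (simp only: mv_sum mv_scale)
      also have "\<dots> = (\<Sum>w\<in>X. coef i' w *s w)"
      proof (rule sum.cong[OF refl])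
        fix w assume w: "w \<in> X"
        have "(1 / \<sigma> w u) *s (MS u *v w) = ((1 / \<sigma> w u) * \<sigma> w u) *s w"
          by (simp only: za(2)[OF w] vector_smult_assoc)
        also have "\<dots> = w" using \<sigma>0[OF w, of u] by simp
        finally show "coef i' w *s ((1 / \<sigma> w u) *s (MS u *v w)) = coef i' w *s w" by simp
      qed
      also have "\<dots> = axis i' 1" by (rule coef[symmetric])
      finally show ?thesis .
    qed
    have "MS u *v y = (\<Sum>i'\<in>UNIV. M u $ i' $ k *s axis i' 1)"
      unfolding y_def by (simp only: mv_sum[where X=UNIV] mv_scale inner)
    also have "\<dots> = (\<Sum>i'\<in>UNIV. (M u *v axis k 1) $ i' *s axis i' 1)"
      by (simp only: col_entry[symmetric])
    also have "\<dots> = M u *v axis k 1" by (rule basis_expansion)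
    also have "\<dots> = MS u *v (MU u *v axis k 1)"
      using jordan[of u] by (simp add: matrix_vector_mul_assoc)
    finally have "MS u *v y = MS u *v (MU u *v axis k 1)" .
    then have "MU u *v axis k 1 = y" using MSinj[of u y "MU u *v axis k 1"] by simp
    then have "MU u $ i $ k = y $ i" by (simp only: col_entry[of "MU u"])
    also have "\<dots> = (\<Sum>i'\<in>UNIV. M u $ i' $ k * (\<Sum>w\<in>X. coef i' w * ((1 / \<sigma> w u) * w $ i)))"
      by (simp add: y_def)
    finally show ?thesis .
  qed
  have "rational_mat_fun MS"
    by (rule rf_mat, unfold MSent) (intro rf_sum rf_mult rf_const \<sigma>rf)
  moreover have "rational_mat_fun MU"
    by (rule rf_mat, unfold MUent) (intro rf_sum rf_mult rf_const \<sigma>rf Mrf rf_inverse \<sigma>0 ballI allI; assumption?)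
  ultimately show ?thesis ..
qed


end
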